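(* Let $\mu,\nu$ be continuous probability distributions on $\mathbb{R}^d$ and let $q\ge 1$. Then for every $\sigma>0$, $\mathrm{DP}_\sigma\mathrm{SWD}_q^q(\mu,\nu)=0$ if and only if $\mu=\nu$.
   Context: For $\mathbf{u}\in\mathbb{S}^{d-1}=\{\mathbf{u}\in\mathbb{R}^d:\|\mathbf{u}\|_2=1\}$, $\mathcal{R}_\mathbf{u}\mu$ denotes the push-forward of $\mu$ by the map $\mathbf{x}\mapsto\mathbf{u}^\top\mathbf{x}$ (a probability measure on $\mathbb{R}$). $\mathcal{N}_\sigma$ is the centered Gaussian distribution $\mathcal{N}(0,\sigma^2)$ on $\mathbb{R}$ and $*$ denotes convolution of measures. For probability measures $\mu',\nu'$ on $\mathbb{R}$, $W_q(\mu',\nu')=\big(\int_0^1|F_{\mu'}^{-1}(z)-F_{\nu'}^{-1}(z)|^q dz\big)^{1/q}$ is the $q$-Wasserstein distance (Euclidean ground cost), $F^{-1}$ being the inverse cumulative distribution function. With $u_d$ the uniform probability measure on $\mathbb{S}^{d-1}$, $$\mathrm{DP}_\sigma\mathrm{SWD}_q^q(\mu,\nu)\doteq\int_{\mathbb{S}^{d-1}}W_q^q(\mathcal{R}_\mathbf{u}\mu*\mathcal{N}_\sigma,\ \mathcal{R}_\mathbf{u}\nu*\mathcal{N}_\sigma)\,du_d(\mathbf{u}).$$ *)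

theory Defs
  imports "HOL-Probability.Probability"
begin

definition radon_proj :: "'a::euclidean_space \<Rightarrow> 'a measure \<Rightarrow> real measure" where
  "radon_proj u M = distr M borel (\<lambda>x. u \<bullet> x)"

definition gauss_measure :: "real \<Rightarrow> real measure" where
  "gauss_measure \<sigma> = density lborel (normal_density 0 \<sigma>)"

definition quantile :: "real measure \<Rightarrow> real \<Rightarrow> real" where
  "quantile M z = Inf {x. z \<le> cdf M x}"

text \<open>q-th power of the 1D q-Wasserstein distance, via quantile functions
  (as an extended nonnegative real, possibly infinite).\<close>
definition wasserstein_pow :: "real \<Rightarrow> real measure \<Rightarrow> real measure \<Rightarrow> ennreal" where
  "wasserstein_pow q M N =
     (\<integral>\<^sup>+ z \<in> {0<..<1}. ennreal (\<bar>quantile M z - quantile N z\<bar> powr q) \<partial>lborel)"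

text \<open>Uniform probability measure on the unit sphere S^{d-1}: the normalized surface
  measure, realized as the push-forward of the uniform distribution on the unit ball
  under radial projection x \<mapsto> x / |x|.\<close>
definition sphere_uniform :: "'a::euclidean_space measure" where
  "sphere_uniform = distr (uniform_measure lborel (ball 0 1)) borel (\<lambda>x. sgn x)"

definition DPSWD_pow :: "real \<Rightarrow> real \<Rightarrow> 'a::euclidean_space measure \<Rightarrow> 'a measure \<Rightarrow> ennreal" where
  "DPSWD_pow \<sigma> q \<mu> \<nu> =
     (\<integral>\<^sup>+ u. wasserstein_pow q (radon_proj u \<mu> \<star> gauss_measure \<sigma>)
                                 (radon_proj u \<nu> \<star> gauss_measure \<sigma>) \<partial>sphere_uniform)"

end

theory Submission
  imports Defs
begin

lemma char_conv:
  fixes \<alpha> \<gamma> :: "real measure"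
  assumes "prob_space \<alpha>" "sets \<alpha> = sets borel" "prob_space \<gamma>" "sets \<gamma> = sets borel"
  shows "char (\<alpha> \<star> \<gamma>) s = char \<alpha> s * char \<gamma> s"
proof -
  interpret A: prob_space \<alpha> by fact
  interpret G: prob_space \<gamma> by fact
  interpret P: pair_prob_space \<alpha> \<gamma> ..
  have [measurable_cong]: "sets \<alpha> = sets borel" "sets \<gamma> = sets borel" using assms by auto
  have "char (\<alpha> \<star> \<gamma>) s = (\<integral>z. iexp (s * ((\<lambda>(x,y). x + y) z)) \<partial>(\<alpha> \<Otimes>\<^sub>M \<gamma>))"
    unfolding char_def convolution_def
    by (subst integral_distr) auto
  also have "\<dots> = (\<integral>z. (\<lambda>(x,y). iexp (s * x) * iexp (s * y)) z \<partial>(\<alpha> \<Otimes>\<^sub>M \<gamma>))"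
    by (intro Bochner_Integration.integral_cong) (auto simp: field_simps exp_add split: prod.splits)
  also have "\<dots> = (\<integral>x. (\<integral>y. iexp (s * x) * iexp (s * y) \<partial>\<gamma>) \<partial>\<alpha>)"
  proof (rule P.integral_fst[symmetric])
    show "integrable (\<alpha> \<Otimes>\<^sub>M \<gamma>) (\<lambda>(x, y). iexp (s * x) * iexp (s * y))"
      by (rule P.integrable_const_bound[where B=1]) (auto simp: norm_mult)
  qed
  also have "\<dots> = (\<integral>x. iexp (s * x) * char \<gamma> s \<partial>\<alpha>)"
    unfolding char_def by simp
  also have "\<dots> = char \<alpha> s * char \<gamma> s"
    unfolding char_def by simp
  finally show ?thesis .
qed

lemma char_gauss:
  assumes "\<sigma> > 0"
  shows "char (gauss_measure \<sigma>) s = complex_of_real (exp (- ((\<sigma> * s)^2) / 2))"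
proof -
  have "char (gauss_measure \<sigma>) s = (\<integral>x. normal_density 0 \<sigma> x *\<^sub>R iexp (s * x) \<partial>lborel)"
    unfolding char_def gauss_measure_def
    by (subst integral_density) auto
  also have "\<dots> = \<bar>\<sigma>\<bar> *\<^sub>R (\<integral>y. normal_density 0 \<sigma> (0 + \<sigma> * y) *\<^sub>R iexp (s * (0 + \<sigma> * y)) \<partial>lborel)"
    using assms by (intro lborel_integral_real_affine) auto
  also have "\<dots> = (\<integral>y. std_normal_density y *\<^sub>R iexp ((\<sigma> * s) * y) \<partial>lborel)"
  proof -
    have "\<And>y. \<bar>\<sigma>\<bar> * normal_density 0 \<sigma> (0 + \<sigma> * y) = std_normal_density y"
      using assms by (simp add: normal_density_def real_sqrt_mult field_simps power_mult_distrib)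
    then show ?thesis
      by (simp only: integral_scaleR_right[symmetric] scaleR_scaleR)
         (intro Bochner_Integration.integral_cong; simp add: ac_simps)
  qed
  also have "\<dots> = char std_normal_distribution (\<sigma> * s)"
    unfolding char_def by (subst integral_density) auto
  also have "\<dots> = complex_of_real (exp (- ((\<sigma> * s)^2) / 2))"
    by (simp add: char_std_normal_distribution)
  finally show ?thesis .
qed

lemma iexp_diff_le: "cmod (iexp a - iexp b) \<le> \<bar>a - b\<bar>"
proof -
  have "iexp a - iexp b = iexp b * (iexp (a - b) - 1)"
    by (simp add: algebra_simps exp_diff[symmetric] exp_add[symmetric])
  also have "cmod \<dots> = cmod (iexp (a - b) - 1)"
    by (simp add: norm_mult)
  also have "\<dots> \<le> \<bar>a - b\<bar>"
    using iexp_approx1[of "a - b" 0] by simp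
  finally show ?thesis .
qed

lemma iexp_norm_diff_le2: "cmod (iexp a - iexp b) \<le> 2"
proof -
  have "cmod (iexp a - iexp b) \<le> cmod (iexp a) + cmod (iexp b)" by (rule norm_triangle_ineq4)
  then show ?thesis by simp
qed

lemma quantile_distr:
  assumes "real_distribution \<alpha>"
  shows "distr (restrict_space lborel {0<..<1::real}) borel (quantile \<alpha>) = \<alpha>"
proof -
  interpret cdf_distribution \<alpha> using assms by (simp add: cdf_distribution_def)
  have "quantile \<alpha> = (\<lambda>\<omega>. Inf {x. \<omega> \<le> cdf \<alpha> x})" by (auto simp: quantile_def fun_eq_iff)
  then show ?thesis using distr_I_eq_M by simp
qed

lemma quantile_measurable:
  assumes "real_distribution \<alpha>"
  shows "quantile \<alpha> \<in> borel_measurable (restrict_space lborel {0<..<1::real})"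
proof -
  interpret cdf_distribution \<alpha> using assms by (simp add: cdf_distribution_def)
  have "quantile \<alpha> = (\<lambda>\<omega>. Inf {x. \<omega> \<le> cdf \<alpha> x})" by (auto simp: quantile_def fun_eq_iff)
  moreover have "sets (restrict_space lborel {0<..<1::real}) = sets (restrict_space borel {0<..<1::real})"
    by (simp add: sets_restrict_space)
  ultimately show ?thesis using measurable_CI
    by (simp cong: measurable_cong_sets)
qed

lemma W_lower:
  fixes \<alpha> \<beta> :: "real measure"
  assumes \<alpha>: "real_distribution \<alpha>" and \<beta>: "real_distribution \<beta>" and s: "s > 0" and q: "q > 0"
  shows "ennreal (((cmod (char \<alpha> s - char \<beta> s)) / (2 * s)) powr q * (cmod (char \<alpha> s - char \<beta> s) / 4))
           \<le> wasserstein_pow q \<alpha> \<beta>"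
proof -
  define D where "D = cmod (char \<alpha> s - char \<beta> s)"
  define \<Omega> where "\<Omega> = restrict_space lborel {0<..<1::real}"
  define A where "A = quantile \<alpha>"
  define B where "B = quantile \<beta>"
  interpret \<Omega>: prob_space \<Omega>
    unfolding \<Omega>_def by (auto simp add: emeasure_restrict_space space_restrict_space intro!: prob_spaceI)
  have [measurable]: "A \<in> borel_measurable \<Omega>" "B \<in> borel_measurable \<Omega>"
    unfolding A_def B_def \<Omega>_def using quantile_measurable \<alpha> \<beta> by auto
  have cA: "char \<alpha> s = (\<integral>z. iexp (s * A z) \<partial>\<Omega>)"
    unfolding char_def A_def \<Omega>_def
    by (subst (1) quantile_distr[OF \<alpha>, symmetric], subst integral_distr)
       (use quantile_measurable[OF \<alpha>] in auto)
  have cB: "char \<beta> s = (\<integral>z. iexp (s * B z) \<partial>\<Omega>)"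
    unfolding char_def B_def \<Omega>_def
    by (subst (1) quantile_distr[OF \<beta>, symmetric], subst integral_distr)
       (use quantile_measurable[OF \<beta>] in auto)
  define m where "m z = cmod (iexp (s * A z) - iexp (s * B z))" for z
  have [measurable]: "m \<in> borel_measurable \<Omega>" unfolding m_def by measurable
  have intA: "integrable \<Omega> (\<lambda>z. iexp (s * A z))"
    by (rule \<Omega>.integrable_const_bound[where B=1]) auto
  have intB: "integrable \<Omega> (\<lambda>z. iexp (s * B z))"
    by (rule \<Omega>.integrable_const_bound[where B=1]) auto
  have m2: "m z \<le> 2" for z unfolding m_def by (rule iexp_norm_diff_le2)
  have m0: "m z \<ge> 0" for z unfolding m_def by simp
  have intm: "integrable \<Omega> m"
    by (rule \<Omega>.integrable_const_bound[where B=2]) (use m2 m0 in auto)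
  have "D = cmod (\<integral>z. iexp (s * A z) - iexp (s * B z) \<partial>\<Omega>)"
    unfolding D_def cA cB using intA intB by simp
  also have "\<dots> \<le> (\<integral>z. m z \<partial>\<Omega>)"
    unfolding m_def by (rule integral_norm_bound)
  finally have D_le: "D \<le> (\<integral>z. m z \<partial>\<Omega>)" .
  have D0': "D \<ge> 0" by (simp add: D_def)
  define E where "E = {z\<in>space \<Omega>. D / 2 \<le> m z}"
  have E[measurable]: "E \<in> sets \<Omega>" unfolding E_def by measurable
  have "(\<integral>z. m z \<partial>\<Omega>) \<le> (\<integral>z. D / 2 + 2 * indicator E z \<partial>\<Omega>)"
  proof (rule integral_mono[OF intm])
    show "integrable \<Omega> (\<lambda>z. D / 2 + 2 * indicator E z)"
      using E by (intro Bochner_Integration.integrable_add integrable_mult_right integrable_real_indicator) (auto simp: \<Omega>.emeasure_eq_measure)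
    fix z assume z: "z \<in> space \<Omega>"
    note m2[of z] m0[of z]
    then show "m z \<le> D / 2 + 2 * indicator E z"
      using z D0' by (cases "z \<in> E") (auto simp: E_def)
  qed
  also have "\<dots> = D / 2 + 2 * measure \<Omega> E"
    using E \<Omega>.prob_space by (subst Bochner_Integration.integral_add) (auto intro!: integrable_real_indicator simp: \<Omega>.emeasure_eq_measure)
  finally have mE: "D / 4 \<le> measure \<Omega> E" using D_le by simp
  have D0: "D \<ge> 0" by (simp add: D_def)
  have pt: "(D / (2 * s)) powr q * indicator E z \<le> \<bar>A z - B z\<bar> powr q" for z
  proof (cases "z \<in> E")
    case True
    then have "D / 2 \<le> m z" by (simp add: E_def)
    also have "m z \<le> \<bar>s * A z - s * B z\<bar>" unfolding m_def by (rule iexp_diff_le)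
    also have "\<dots> = s * \<bar>A z - B z\<bar>" using s by (simp add: abs_mult right_diff_distrib[symmetric])
    finally have "D / (2 * s) \<le> \<bar>A z - B z\<bar>" using s by (simp add: field_simps)
    then show ?thesis using True D0 s q by (simp add: powr_mono2)
  qed simp
  have "ennreal ((D / (2 * s)) powr q * (D / 4)) \<le> ennreal ((D / (2 * s)) powr q) * emeasure \<Omega> E"
  proof -
    have "(D / (2 * s)) powr q * (D / 4) \<le> (D / (2 * s)) powr q * measure \<Omega> E"
      using mE by (intro mult_left_mono) auto
    then show ?thesis
      by (simp add: \<Omega>.emeasure_eq_measure ennreal_mult'[symmetric])
  qed
  also have "\<dots> = (\<integral>\<^sup>+z. ennreal ((D / (2 * s)) powr q) * indicator E z \<partial>\<Omega>)"
    using E by (simp add: nn_integral_cmult_indicator)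
  also have "\<dots> \<le> (\<integral>\<^sup>+z. ennreal (\<bar>A z - B z\<bar> powr q) \<partial>\<Omega>)"
  proof (intro nn_integral_mono)
    fix z
    show "ennreal ((D / (2 * s)) powr q) * indicator E z \<le> ennreal (\<bar>A z - B z\<bar> powr q)"
      using pt[of z] by (cases "z \<in> E") auto
  qed
  also have "\<dots> = wasserstein_pow q \<alpha> \<beta>"
    unfolding wasserstein_pow_def \<Omega>_def A_def B_def
    by (subst nn_integral_restrict_space) auto
  finally show ?thesis unfolding D_def .
qed

lemma emeasure_ball_pos: "r > 0 \<Longrightarrow> 0 < emeasure lborel (ball (c::'a::euclidean_space) r)"
proof -
  assume r: "r > 0"
  have "emeasure lborel (ball c r) = ennreal (measure lborel (ball c r))"
    using emeasure_lborel_ball_finite[of c r] by (simp add: emeasure_eq_ennreal_measure)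
  then show ?thesis using content_ball_pos[OF r, of c] by simp
qed

lemma sgn_close:
  fixes u0 x :: "'a::euclidean_space"
  assumes u0: "norm u0 = 1" and r: "r > 0" and x: "x \<in> ball (u0 /\<^sub>R 2) (min (1/4) (r/4))"
  shows "x \<in> ball 0 1" "sgn x \<in> ball u0 r"
proof -
  define y where "y = 2 *\<^sub>R x"
  have "dist (u0 /\<^sub>R 2) x < min (1/4) (r/4)" using x by simp
  then have d: "norm (y - u0) < 2 * min (1/4) (r/4)"
  proof -
    have "y - u0 = - 2 *\<^sub>R (u0 /\<^sub>R 2 - x)" by (simp add: y_def algebra_simps)
    then have "norm (y - u0) = 2 * dist (u0 /\<^sub>R 2) x" by (simp add: dist_norm)
    then show ?thesis using \<open>dist (u0 /\<^sub>R 2) x < min (1/4) (r/4)\<close> by simp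
  qed
  have ny: "\<bar>norm y - 1\<bar> \<le> norm (y - u0)"
    using norm_triangle_ineq3[of y u0] u0 by simp
  then have ny2: "norm y \<ge> 1/2" "norm y < 3/2" using d by auto
  then show "x \<in> ball 0 1" by (simp add: y_def)
  have "sgn x = y /\<^sub>R norm y"
    using ny2 by (simp add: y_def sgn_div_norm)
  also have "dist u0 (y /\<^sub>R norm y) < r"
  proof -
    have nz: "norm y \<noteq> 0" using ny2 by auto
    have "y /\<^sub>R norm y - y = (1 - norm y) *\<^sub>R (y /\<^sub>R norm y)"
      using nz by (simp add: algebra_simps)
    then have "norm (y /\<^sub>R norm y - y) = \<bar>1 - norm y\<bar> * (norm y / norm y)"
      by (simp only: norm_scaleR norm_sgn) (simp add: abs_mult)
    then have "norm (y /\<^sub>R norm y - y) = \<bar>1 - norm y\<bar>"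
      using nz by simp
    then have "norm (y /\<^sub>R norm y - u0) \<le> \<bar>1 - norm y\<bar> + norm (y - u0)"
      using norm_triangle_ineq[of "y /\<^sub>R norm y - y" "y - u0"] by simp
    also have "\<dots> \<le> 2 * norm (y - u0)" using ny by simp
    also have "\<dots> < r" using d by simp
    finally show ?thesis by (simp add: dist_norm norm_minus_commute)
  qed
  finally show "sgn x \<in> ball u0 r" by simp
qed

lemma sphere_uniform_ball_pos:
  fixes u0 :: "'a::euclidean_space"
  assumes u0: "norm u0 = 1" and r: "r > 0"
  shows "0 < emeasure (sphere_uniform :: 'a measure) (ball u0 r)"
proof -
  have msgn: "sgn -` ball u0 r \<in> sets (borel :: 'a measure)"
    using measurable_sets_borel[OF borel_measurable_sgn, of "ball u0 r"] by auto
  define U :: "'a measure" where "U = uniform_measure lborel (ball 0 1)"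
  have "emeasure (sphere_uniform :: 'a measure) (ball u0 r) = emeasure U (sgn -` ball u0 r)"
    unfolding sphere_uniform_def U_def by (subst emeasure_distr) auto
  also have "\<dots> = emeasure lborel (ball 0 1 \<inter> sgn -` ball u0 r) / emeasure lborel (ball (0::'a) 1)"
    unfolding U_def using msgn by (subst emeasure_uniform_measure) auto
  finally have eq: "emeasure (sphere_uniform :: 'a measure) (ball u0 r) =
      emeasure lborel (ball 0 1 \<inter> sgn -` ball u0 r) / emeasure lborel (ball (0::'a) 1)" .
  have sub: "ball (u0 /\<^sub>R 2) (min (1/4) (r/4)) \<subseteq> ball 0 1 \<inter> sgn -` ball u0 r"
    using sgn_close[OF u0 r] by blast
  have "0 < emeasure lborel (ball (u0 /\<^sub>R 2) (min (1/4) (r/4)))"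
    using r by (intro emeasure_ball_pos) auto
  also have "\<dots> \<le> emeasure lborel (ball 0 1 \<inter> sgn -` ball u0 r)"
    using sub msgn by (intro emeasure_mono) auto
  finally have "0 < emeasure lborel (ball 0 1 \<inter> sgn -` ball u0 r)" .
  then show ?thesis
    unfolding eq using emeasure_lborel_ball_finite[of "0::'a" 1]
    by (simp add: ennreal_zero_less_divide)
qed

definition mchar :: "'a::euclidean_space measure \<Rightarrow> 'a \<Rightarrow> complex" where
  "mchar M t = (CLINT x|M. iexp (t \<bullet> x))"

lemma char_radon:
  assumes "sets \<mu> = sets borel"
  shows "char (radon_proj u \<mu>) s = mchar \<mu> (s *\<^sub>R u)"
proof -
  have [measurable_cong]: "sets \<mu> = sets borel" by fact
  show ?thesis
    unfolding char_def radon_proj_def mchar_def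
    by (subst integral_distr) auto
qed

lemma mchar_cont:
  assumes "prob_space \<mu>" "sets \<mu> = sets borel"
  shows "isCont (mchar \<mu>) t"
  unfolding continuous_at_sequentially
proof safe
  interpret prob_space \<mu> by fact
  have [measurable_cong]: "sets \<mu> = sets borel" by fact
  fix X assume X: "X \<longlonglongrightarrow> t"
  show "(mchar \<mu> \<circ> X) \<longlonglongrightarrow> mchar \<mu> t"
    unfolding comp_def mchar_def
    by (rule integral_dominated_convergence[where w="\<lambda>_. 1"]) (auto intro!: tendsto_intros X)
qed

lemma mchar_zero:
  assumes "prob_space \<mu>"
  shows "mchar \<mu> 0 = 1"
proof -
  interpret prob_space \<mu> by fact
  show ?thesis unfolding mchar_def by (simp add: prob_space)
qed

lemma real_dist_conv:
  fixes \<mu> :: "'a::euclidean_space measure"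
  assumes "prob_space \<mu>" "sets \<mu> = sets borel" "\<sigma> > 0"
  shows "real_distribution (radon_proj u \<mu> \<star> gauss_measure \<sigma>)"
proof -
  have [measurable_cong]: "sets \<mu> = sets borel" by fact
  interpret A: prob_space "radon_proj u \<mu>"
    unfolding radon_proj_def by (rule prob_space.prob_space_distr[OF assms(1)]) auto
  interpret G: prob_space "gauss_measure \<sigma>"
    unfolding gauss_measure_def by (rule prob_space_normal_density[OF assms(3)])
  interpret P: pair_prob_space "radon_proj u \<mu>" "gauss_measure \<sigma>" ..
  have "prob_space (radon_proj u \<mu> \<star> gauss_measure \<sigma>)"
    unfolding convolution_def
    by (rule P.prob_space_distr) (auto simp: radon_proj_def gauss_measure_def)
  then show ?thesis
    by (auto simp: real_distribution_def real_distribution_axioms_def)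
qed

lemma char_conv_proj:
  fixes \<mu> :: "'a::euclidean_space measure"
  assumes "prob_space \<mu>" "sets \<mu> = sets borel" "\<sigma> > 0"
  shows "char (radon_proj u \<mu> \<star> gauss_measure \<sigma>) s
        = mchar \<mu> (s *\<^sub>R u) * complex_of_real (exp (- ((\<sigma> * s)^2) / 2))"
proof -
  have [measurable_cong]: "sets \<mu> = sets borel" by fact
  have "prob_space (radon_proj u \<mu>)"
    unfolding radon_proj_def by (rule prob_space.prob_space_distr[OF assms(1)]) auto
  moreover have "prob_space (gauss_measure \<sigma>)"
    unfolding gauss_measure_def by (rule prob_space_normal_density[OF assms(3)])
  ultimately show ?thesis
    using char_conv[of "radon_proj u \<mu>" "gauss_measure \<sigma>" s] char_radon[OF assms(2)]
      char_gauss[OF assms(3)]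
    by (simp add: radon_proj_def gauss_measure_def)
qed


inductive TP :: "('a::euclidean_space \<Rightarrow> real) \<Rightarrow> bool" where
  TP_cos: "TP (\<lambda>x. c * cos (t \<bullet> x))"
| TP_sin: "TP (\<lambda>x. c * sin (t \<bullet> x))"
| TP_add: "TP f \<Longrightarrow> TP g \<Longrightarrow> TP (\<lambda>x. f x + g x)"

lemma TP_const: "TP (\<lambda>x. c)"
  using TP_cos[of c 0] by simp

lemma TP_sum: "finite A \<Longrightarrow> (\<And>i. i \<in> A \<Longrightarrow> TP (f i)) \<Longrightarrow> TP (\<lambda>x. \<Sum>i\<in>A. f i x)"
  by (induction A rule: finite_induct) (auto intro: TP_const TP_add)

lemma TP_cos_cos: "TP (\<lambda>x. c * cos (t \<bullet> x) * (d * cos (s \<bullet> x)))"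
proof -
  have "c * cos (t \<bullet> x) * (d * cos (s \<bullet> x)) =
        (c * d / 2) * cos ((t - s) \<bullet> x) + (c * d / 2) * cos ((t + s) \<bullet> x)" for x
    by (simp add: inner_diff_left inner_add_left cos_diff cos_add algebra_simps)
  then have e: "(\<lambda>x. c * cos (t \<bullet> x) * (d * cos (s \<bullet> x))) = (\<lambda>x. (c * d / 2) * cos ((t - s) \<bullet> x) + (c * d / 2) * cos ((t + s) \<bullet> x))" by (rule ext)
  show ?thesis by (subst e) (intro TP.intros)
qed

lemma TP_cos_sin: "TP (\<lambda>x. c * cos (t \<bullet> x) * (d * sin (s \<bullet> x)))"
proof -
  have "c * cos (t \<bullet> x) * (d * sin (s \<bullet> x)) =
        (c * d / 2) * sin ((t + s) \<bullet> x) + (- c * d / 2) * sin ((t - s) \<bullet> x)" for x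
    by (simp add: inner_diff_left inner_add_left sin_diff sin_add algebra_simps)
  then show ?thesis by (simp only:) (intro TP.intros)
qed

lemma TP_sin_cos: "TP (\<lambda>x. c * sin (t \<bullet> x) * (d * cos (s \<bullet> x)))"
proof -
  have "c * sin (t \<bullet> x) * (d * cos (s \<bullet> x)) =
        (c * d / 2) * sin ((t + s) \<bullet> x) + (c * d / 2) * sin ((t - s) \<bullet> x)" for x
    by (simp add: inner_diff_left inner_add_left sin_diff sin_add algebra_simps)
  then show ?thesis by (simp only:) (intro TP.intros)
qed

lemma TP_sin_sin: "TP (\<lambda>x. c * sin (t \<bullet> x) * (d * sin (s \<bullet> x)))"
proof -
  have "c * sin (t \<bullet> x) * (d * sin (s \<bullet> x)) =
        (c * d / 2) * cos ((t - s) \<bullet> x) + (- c * d / 2) * cos ((t + s) \<bullet> x)" for x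
    by (simp add: inner_diff_left inner_add_left cos_diff cos_add algebra_simps)
  then show ?thesis by (simp only:) (intro TP.intros)
qed

lemma TP_mult_cos: "TP g \<Longrightarrow> TP (\<lambda>x. c * cos (t \<bullet> x) * g x)"
proof (induction rule: TP.induct)
  case (TP_add f g)
  then show ?case using TP.TP_add[OF TP_add.IH] by (simp add: algebra_simps)
qed (auto intro: TP_cos_cos TP_cos_sin)

lemma TP_mult_sin: "TP g \<Longrightarrow> TP (\<lambda>x. c * sin (t \<bullet> x) * g x)"
proof (induction rule: TP.induct)
  case (TP_add f g)
  then show ?case using TP.TP_add[OF TP_add.IH] by (simp add: algebra_simps)
qed (auto intro: TP_sin_cos TP_sin_sin)

lemma TP_mult: "TP f \<Longrightarrow> TP g \<Longrightarrow> TP (\<lambda>x. f x * g x)"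
proof (induction rule: TP.induct)
  case (TP_add f1 f2)
  then show ?case using TP.TP_add[OF TP_add.IH] by (simp add: algebra_simps)
qed (auto intro: TP_mult_cos TP_mult_sin)

lemma TP_cont: "TP f \<Longrightarrow> continuous_on UNIV f"
  by (induction rule: TP.induct) (auto intro!: continuous_intros)

lemma TP_bounded: "TP f \<Longrightarrow> \<exists>B. \<forall>x. \<bar>f x\<bar> \<le> B"
proof (induction rule: TP.induct)
  case (TP_cos c t)
  have "\<bar>c * cos (t \<bullet> x)\<bar> \<le> \<bar>c\<bar>" for x
    by (simp add: abs_mult mult_left_le)
  then show ?case by blast
next
  case (TP_sin c t)
  have "\<bar>c * sin (t \<bullet> x)\<bar> \<le> \<bar>c\<bar>" for x
    by (simp add: abs_mult mult_left_le)
  then show ?case by blast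
next
  case (TP_add f g)
  then obtain B1 B2 where "\<forall>x. \<bar>f x\<bar> \<le> B1" "\<forall>x. \<bar>g x\<bar> \<le> B2" by blast
  then have "\<bar>f x + g x\<bar> \<le> B1 + B2" for x
    by (meson abs_triangle_ineq add_mono order_trans)
  then show ?case by blast
qed

lemma integrable_bounded_cont:
  fixes f :: "'a::euclidean_space \<Rightarrow> real"
  assumes "prob_space \<mu>" "sets \<mu> = sets borel" "continuous_on UNIV f" "\<And>x. \<bar>f x\<bar> \<le> B"
  shows "integrable \<mu> f"
proof -
  interpret prob_space \<mu> by fact
  have [measurable_cong]: "sets \<mu> = sets borel" by fact
  have [measurable]: "f \<in> borel_measurable borel"
    using assms(3) by (rule borel_measurable_continuous_onI)
  show ?thesis
    by (rule integrable_const_bound[where B=B]) (use assms(4) in auto)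
qed

lemma TP_integrable:
  assumes "prob_space \<mu>" "sets \<mu> = sets borel" "TP f"
  shows "integrable \<mu> f"
  using TP_bounded[OF assms(3)] integrable_bounded_cont[OF assms(1,2) TP_cont[OF assms(3)]] by blast

lemma mchar_Re: 
  assumes "prob_space \<mu>" "sets \<mu> = sets borel"
  shows "Re (mchar \<mu> t) = (\<integral>x. cos (t \<bullet> x) \<partial>\<mu>)" "Im (mchar \<mu> t) = (\<integral>x. sin (t \<bullet> x) \<partial>\<mu>)"
proof -
  interpret prob_space \<mu> by fact
  have [measurable_cong]: "sets \<mu> = sets borel" by fact
  have int: "integrable \<mu> (\<lambda>x. iexp (t \<bullet> x))"
    by (rule integrable_const_bound[where B=1]) auto
  have int': "integrable \<mu> (\<lambda>x. cis (t \<bullet> x))" using int by (simp add: cis_conv_exp)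
  have m: "mchar \<mu> t = (\<integral>x. cis (t \<bullet> x) \<partial>\<mu>)"
    unfolding mchar_def by (simp add: cis_conv_exp)
  have "Re (\<integral>x. cis (t \<bullet> x) \<partial>\<mu>) = (\<integral>x. Re (cis (t \<bullet> x)) \<partial>\<mu>)"
    by (rule integral_Re[symmetric]) (rule int')
  then show "Re (mchar \<mu> t) = (\<integral>x. cos (t \<bullet> x) \<partial>\<mu>)" by (simp add: m)
  have "Im (\<integral>x. cis (t \<bullet> x) \<partial>\<mu>) = (\<integral>x. Im (cis (t \<bullet> x)) \<partial>\<mu>)"
    by (rule integral_Im[symmetric]) (rule int')
  then show "Im (mchar \<mu> t) = (\<integral>x. sin (t \<bullet> x) \<partial>\<mu>)" by (simp add: m)
qed

lemma TP_integral_eq: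
  assumes "prob_space \<mu>" "sets \<mu> = sets borel" "prob_space \<nu>" "sets \<nu> = sets borel"
    and eq: "\<And>t. mchar \<mu> t = mchar \<nu> t"
    and "TP f"
  shows "(\<integral>x. f x \<partial>\<mu>) = (\<integral>x. f x \<partial>\<nu>)"
  using assms(6)
proof (induction rule: TP.induct)
  case (TP_cos c t)
  then show ?case using mchar_Re(1)[OF assms(1,2), of t] mchar_Re(1)[OF assms(3,4), of t] eq[of t] by simp
next
  case (TP_sin c t)
  then show ?case using mchar_Re(2)[OF assms(1,2), of t] mchar_Re(2)[OF assms(3,4), of t] eq[of t] by simp
next
  case (TP_add f g)
  then show ?case
    using TP_integrable[OF assms(1,2)] TP_integrable[OF assms(3,4)] by simp
qed

definition torus :: "real \<Rightarrow> 'a::euclidean_space \<Rightarrow> 'a \<times> 'a" where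
  "torus \<omega> x = ((\<Sum>i\<in>Basis. cos (\<omega> * (x \<bullet> i)) *\<^sub>R i), (\<Sum>i\<in>Basis. sin (\<omega> * (x \<bullet> i)) *\<^sub>R i))"

lemma torus_inner:
  assumes "i \<in> Basis"
  shows "fst (torus \<omega> x) \<bullet> i = cos (\<omega> * (x \<bullet> i))" "snd (torus \<omega> x) \<bullet> i = sin (\<omega> * (x \<bullet> i))"
  using assms by (simp_all add: torus_def)

lemma linear_real_decomp:
  fixes p :: "'b::euclidean_space \<Rightarrow> real"
  assumes "bounded_linear p"
  shows "p z = (\<Sum>b\<in>Basis. (z \<bullet> b) * p b)"
proof -
  interpret bounded_linear p by fact
  have "p z = p (\<Sum>b\<in>Basis. (z \<bullet> b) *\<^sub>R b)" by (simp add: euclidean_representation)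
  also have "\<dots> = (\<Sum>b\<in>Basis. (z \<bullet> b) * p b)" by (simp add: sum scale)
  finally show ?thesis .
qed

lemma TP_poly:
  fixes p :: "'a::euclidean_space \<times> 'a \<Rightarrow> real"
  assumes "real_polynomial_function p"
  shows "TP (\<lambda>x::'a. p (torus \<omega> x))"
  using assms
proof (induction rule: real_polynomial_function.induct)
  case (linear p)
  have "TP (\<lambda>x::'a. \<Sum>b\<in>Basis. (torus \<omega> x \<bullet> b) * p b)"
  proof (rule TP_sum)
    fix b :: "'a \<times> 'a" assume "b \<in> Basis"
    then consider u where "u \<in> Basis" "b = (u, 0)" | v where "v \<in> Basis" "b = (0, v)"
      unfolding Basis_prod_def by auto
    then show "TP (\<lambda>x. (torus \<omega> x \<bullet> b) * p b)"
    proof cases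
      case 1
      have "(torus \<omega> x \<bullet> b) * p b = p b * cos ((\<omega> *\<^sub>R u) \<bullet> x)" for x
      proof -
        have e1: "torus \<omega> x \<bullet> b = cos (\<omega> * (x \<bullet> u))"
          using 1 by (simp add: inner_Pair_0 torus_inner)
        have e2: "(\<omega> *\<^sub>R u) \<bullet> x = \<omega> * (x \<bullet> u)" by (simp add: inner_commute)
        show ?thesis by (simp only: e1 e2 mult.commute)
      qed
      then show ?thesis by (simp only:) (rule TP_cos)
    next
      case 2
      have "(torus \<omega> x \<bullet> b) * p b = p b * sin ((\<omega> *\<^sub>R v) \<bullet> x)" for x
      proof -
        have e1: "torus \<omega> x \<bullet> b = sin (\<omega> * (x \<bullet> v))"
          using 2 by (simp add: inner_Pair_0 torus_inner)
        have e2: "(\<omega> *\<^sub>R v) \<bullet> x = \<omega> * (x \<bullet> v)" by (simp add: inner_commute)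
        show ?thesis by (simp only: e1 e2 mult.commute)
      qed
      then show ?thesis by (simp only:) (rule TP_sin)
    qed
  qed simp
  moreover have "(\<lambda>x. p (torus \<omega> x)) = (\<lambda>x::'a. \<Sum>b\<in>Basis. (torus \<omega> x \<bullet> b) * p b)"
    by (rule ext) (rule linear_real_decomp[OF linear])
  ultimately show ?case by simp
next
  case (const c) show ?case by (rule TP_const)
next
  case (add f g) then show ?case by (intro TP_add) (simp_all add: add.IH)
next
  case (mult f g) then show ?case by (intro TP_mult) (simp_all add: mult.IH)
qed

lemma approx_int:
  fixes g h :: "'a \<Rightarrow> real"
  assumes "prob_space M" "integrable M g" "integrable M h" "\<And>x. \<bar>g x - h x\<bar> \<le> e"
  shows "\<bar>(\<integral>x. g x \<partial>M) - (\<integral>x. h x \<partial>M)\<bar> \<le> e"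
proof -
  interpret prob_space M by fact
  have "\<bar>(\<integral>x. g x \<partial>M) - (\<integral>x. h x \<partial>M)\<bar> = \<bar>\<integral>x. g x - h x \<partial>M\<bar>"
    using assms by simp
  also have "\<dots> \<le> (\<integral>x. \<bar>g x - h x\<bar> \<partial>M)" by (rule integral_abs_bound)
  also have "\<dots> \<le> (\<integral>x. e \<partial>M)"
    using assms by (intro integral_mono) auto
  also have "\<dots> = e" by (simp add: prob_space)
  finally show ?thesis .
qed

lemma torus_periodic:
  assumes a: "a > 0"
  shows "\<exists>y. (\<forall>i\<in>Basis. \<bar>y \<bullet> i\<bar> \<le> 2 * a) \<and> torus (pi / (2 * a)) y = torus (pi / (2 * a)) (x::'a::euclidean_space)"
proof -
  define \<omega> where "\<omega> = pi / (2 * a)"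
  define k where "k i = round ((x \<bullet> i) / (4 * a))" for i
  define y where "y = (\<Sum>i\<in>Basis. (x \<bullet> i - 4 * a * of_int (k i)) *\<^sub>R i)"
  have yi: "y \<bullet> i = x \<bullet> i - 4 * a * of_int (k i)" if "i \<in> Basis" for i
    using that by (simp add: y_def)
  have "\<bar>y \<bullet> i\<bar> \<le> 2 * a" if i: "i \<in> Basis" for i
  proof -
    have "\<bar>of_int (k i) - (x \<bullet> i) / (4 * a)\<bar> \<le> 1/2"
      unfolding k_def by (rule of_int_round_abs_le)
    then have "\<bar>4 * a * (of_int (k i) - (x \<bullet> i) / (4 * a))\<bar> \<le> 4 * a * (1/2)"
      using a by (simp add: abs_mult)
    moreover have "4 * a * (of_int (k i) - (x \<bullet> i) / (4 * a)) = - (y \<bullet> i)"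
      using a i by (simp add: yi field_simps)
    ultimately show ?thesis by simp
  qed
  moreover have "torus \<omega> y = torus \<omega> x"
  proof -
    have sc: "sin (\<omega> * (y \<bullet> i)) = sin (\<omega> * (x \<bullet> i)) \<and> cos (\<omega> * (y \<bullet> i)) = cos (\<omega> * (x \<bullet> i))"
      if i: "i \<in> Basis" for i
    proof -
      have "\<omega> * (y \<bullet> i) = \<omega> * (x \<bullet> i) + 2 * pi * of_int (- k i)"
        using a i by (simp add: yi \<omega>_def field_simps)
      then show ?thesis using sin_cos_eq_iff by blast
    qed
    show ?thesis
      by (rule prod_eqI; rule euclidean_eqI) (use sc in \<open>auto simp: torus_inner\<close>)
  qed
  ultimately show ?thesis unfolding \<omega>_def by blast
qed

lemma torus_collide:
  assumes a: "a > 0"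
    and x: "\<forall>i\<in>Basis. \<bar>x \<bullet> i\<bar> \<le> 2 * a" and y: "\<forall>i\<in>Basis. \<bar>y \<bullet> i\<bar> \<le> 2 * a"
    and T: "torus (pi / (2 * a)) x = torus (pi / (2 * a)) (y::'a::euclidean_space)"
    and ne: "x \<noteq> y"
  shows "\<exists>i\<in>Basis. \<bar>x \<bullet> i\<bar> = 2 * a \<and> \<bar>y \<bullet> i\<bar> = 2 * a"
proof -
  define \<omega> where "\<omega> = pi / (2 * a)"
  obtain i where i: "i \<in> Basis" "x \<bullet> i \<noteq> y \<bullet> i"
    using ne euclidean_eqI by blast
  have "sin (\<omega> * (x \<bullet> i)) = sin (\<omega> * (y \<bullet> i)) \<and> cos (\<omega> * (x \<bullet> i)) = cos (\<omega> * (y \<bullet> i))"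
    using T i(1) torus_inner[OF i(1), of \<omega>] unfolding \<omega>_def by metis
  then obtain n :: int where n: "\<omega> * (x \<bullet> i) = \<omega> * (y \<bullet> i) + 2 * pi * n"
    using sin_cos_eq_iff by blast
  have d: "x \<bullet> i - y \<bullet> i = 4 * a * n"
  proof -
    have "\<omega> * (x \<bullet> i - y \<bullet> i) = 2 * pi * n" using n by (simp add: algebra_simps)
    then have "pi * (x \<bullet> i - y \<bullet> i) = pi * (4 * a * n)" using a by (simp add: \<omega>_def field_simps)
    then show ?thesis using pi_neq_zero by (simp only: mult_cancel_left) simp
  qed
  have "n \<noteq> 0" using d i(2) by auto
  moreover have "\<bar>4 * a * n\<bar> \<le> 4 * a"
  proof -
    have "\<bar>x \<bullet> i\<bar> \<le> 2 * a" "\<bar>y \<bullet> i\<bar> \<le> 2 * a" using x y i(1) by auto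
    then show ?thesis using d by linarith
  qed
  then have "\<bar>real_of_int n\<bar> \<le> 1" using a by (simp add: abs_mult)
  ultimately have "n = 1 \<or> n = -1" by linarith
  moreover have "\<bar>x \<bullet> i\<bar> \<le> 2 * a" "\<bar>y \<bullet> i\<bar> \<le> 2 * a" using x y i(1) by auto
  ultimately have "\<bar>x \<bullet> i\<bar> = 2 * a \<and> \<bar>y \<bullet> i\<bar> = 2 * a" using d by auto
  then show ?thesis using i(1) by blast
qed

lemma periodize:
  fixes f :: "'a::euclidean_space \<Rightarrow> real" and \<mu> \<nu> :: "'a measure"
  assumes a: "a > 0" and fc: "continuous_on UNIV f" and fB: "\<And>x. \<bar>f x\<bar> \<le> B"
    and fz: "\<And>x i. i \<in> Basis \<Longrightarrow> a \<le> \<bar>x \<bullet> i\<bar> \<Longrightarrow> f x = 0"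
    and \<mu>: "prob_space \<mu>" "sets \<mu> = sets borel" and \<nu>: "prob_space \<nu>" "sets \<nu> = sets borel"
    and eq: "\<And>t. mchar \<mu> t = mchar \<nu> t"
  shows "\<exists>g. continuous_on UNIV g \<and> (\<forall>x. \<bar>g x\<bar> \<le> B) \<and>
             (\<forall>x. (\<forall>i\<in>Basis. \<bar>x \<bullet> i\<bar> \<le> 2 * a) \<longrightarrow> g x = f x) \<and>
             (\<integral>x. g x \<partial>\<mu>) = (\<integral>x. g x \<partial>\<nu>)"
proof -
  define \<omega> where "\<omega> = pi / (2 * a)"
  define Q where "Q = {x::'a. \<forall>i\<in>Basis. \<bar>x \<bullet> i\<bar> \<le> 2 * a}"
  define T where "T = (torus \<omega> :: 'a \<Rightarrow> 'a \<times> 'a)"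
  define S where "S = T ` Q"
  have Qeq: "Q = cbox (- ((2 * a) *\<^sub>R One)) ((2 * a) *\<^sub>R One)"
    by (rule set_eqI, simp add: Q_def mem_box abs_le_iff, rule ball_cong) auto
  have cQ: "compact Q" by (simp add: Qeq)
  have Tc: "continuous_on UNIV T"
    unfolding T_def torus_def by (intro continuous_intros)
  have cS: "compact S"
    unfolding S_def by (rule compact_continuous_image[OF continuous_on_subset[OF Tc] cQ]) auto
  have Tper: "\<exists>y\<in>Q. T y = T x" for x
    using torus_periodic[OF a, of x] by (auto simp: Q_def T_def \<omega>_def)
  have TS: "T x \<in> S" for x
    using Tper[of x] unfolding S_def by (metis image_eqI)
  have Tcol: "f x = f y" if "x \<in> Q" "y \<in> Q" "T x = T y" for x y
  proof (cases "x = y")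
    case False
    have hx: "\<forall>i\<in>Basis. \<bar>x \<bullet> i\<bar> \<le> 2 * a" using that(1) by (simp add: Q_def)
    have hy: "\<forall>i\<in>Basis. \<bar>y \<bullet> i\<bar> \<le> 2 * a" using that(2) by (simp add: Q_def)
    have hT: "torus (pi / (2 * a)) x = torus (pi / (2 * a)) y" using that(3) by (simp add: T_def \<omega>_def)
    obtain i where "i \<in> Basis" "\<bar>x \<bullet> i\<bar> = 2 * a" "\<bar>y \<bullet> i\<bar> = 2 * a"
      using torus_collide[OF a hx hy hT False] by blast
    then show ?thesis using fz[of i x] fz[of i y] a by auto
  qed simp
  have qm: "quotient_map (top_of_set Q) (top_of_set S) T"
  proof (rule continuous_imp_quotient_map)
    show "continuous_map (top_of_set Q) (top_of_set S) T"
      using continuous_on_subset[OF Tc] by (auto simp: S_def)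
    show "compact_space (top_of_set Q)"
      using cQ by (simp add: compact_space_subtopology)
    show "Hausdorff_space (top_of_set S)"
      by (simp add: Hausdorff_space_subtopology)
    show "T ` topspace (top_of_set Q) = topspace (top_of_set S)"
      by (simp add: S_def)
  qed
  have hc: "continuous_map (top_of_set Q) euclidean f"
    using continuous_on_subset[OF fc] by simp
  have hcol: "f x = f y" if "x \<in> topspace (top_of_set Q)" "y \<in> topspace (top_of_set Q)" "T x = T y" for x y
    using that by (intro Tcol) auto
  obtain G where G: "continuous_map (top_of_set S) euclidean G"
      "G ` topspace (top_of_set S) = f ` topspace (top_of_set Q)"
      "\<And>x. x \<in> topspace (top_of_set Q) \<Longrightarrow> G (T x) = f x"
    using quotient_map_lift_exists[OF qm hc hcol] by blast
  have Gc: "continuous_on S G" using G(1) by simp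
  have GQ: "G (T x) = f x" if "x \<in> Q" for x using G(3) that by simp
  define g where "g x = G (T x)" for x
  have gc: "continuous_on UNIV g"
    unfolding g_def by (rule continuous_on_compose2[OF Gc Tc]) (auto simp: TS)
  have gB: "\<bar>g x\<bar> \<le> B" for x
  proof -
    obtain y where "y \<in> Q" "T y = T x" using Tper by blast
    then have "g x = f y" by (metis GQ g_def)
    then show ?thesis using fB by simp
  qed
  have gQ: "g x = f x" if "\<forall>i\<in>Basis. \<bar>x \<bullet> i\<bar> \<le> 2 * a" for x
    using GQ that by (simp add: g_def Q_def)
  have gint: "integrable \<mu> g" "integrable \<nu> g"
    using integrable_bounded_cont[OF \<mu> gc gB] integrable_bounded_cont[OF \<nu> gc gB] by auto
  have approx: "\<bar>(\<integral>x. g x \<partial>\<mu>) - (\<integral>x. g x \<partial>\<nu>)\<bar> \<le> 2 * e" if e: "e > 0" for e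
  proof -
    obtain p where p: "polynomial_function p" "\<forall>z\<in>S. norm (G z - p z) < e"
      using Stone_Weierstrass_polynomial_function[OF cS Gc e] by blast
    have TPp: "TP (\<lambda>x. p (T x))"
      unfolding T_def by (rule TP_poly) (use p(1) in \<open>simp add: real_polynomial_function_eq\<close>)
    have close: "\<bar>g x - p (T x)\<bar> \<le> e" for x
      using p(2) TS[of x] by (auto simp: g_def)
    have "\<bar>(\<integral>x. g x \<partial>\<mu>) - (\<integral>x. p (T x) \<partial>\<mu>)\<bar> \<le> e"
      by (rule approx_int[OF \<mu>(1) gint(1) TP_integrable[OF \<mu> TPp] close])
    moreover have "\<bar>(\<integral>x. g x \<partial>\<nu>) - (\<integral>x. p (T x) \<partial>\<nu>)\<bar> \<le> e"
      by (rule approx_int[OF \<nu>(1) gint(2) TP_integrable[OF \<nu> TPp] close])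
    moreover have "(\<integral>x. p (T x) \<partial>\<mu>) = (\<integral>x. p (T x) \<partial>\<nu>)"
      by (rule TP_integral_eq[OF \<mu> \<nu> eq TPp])
    ultimately show ?thesis by linarith
  qed
  have "(\<integral>x. g x \<partial>\<mu>) = (\<integral>x. g x \<partial>\<nu>)"
  proof (rule ccontr)
    assume ne: "(\<integral>x. g x \<partial>\<mu>) \<noteq> (\<integral>x. g x \<partial>\<nu>)"
    define d where "d = \<bar>(\<integral>x. g x \<partial>\<mu>) - (\<integral>x. g x \<partial>\<nu>)\<bar>"
    have "d > 0" using ne by (simp add: d_def)
    then have "d \<le> 2 * (d / 4)" using approx[of "d / 4"] by (simp add: d_def)
    then show False using \<open>d > 0\<close> by simp
  qed
  then show ?thesis using gc gB gQ by blast
qed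

lemma cont_integral_eq:
  fixes f :: "'a::euclidean_space \<Rightarrow> real" and \<mu> \<nu> :: "'a measure"
  assumes a0: "a0 > 0" and fc: "continuous_on UNIV f" and fB: "\<And>x. \<bar>f x\<bar> \<le> B"
    and fz: "\<And>x i. i \<in> Basis \<Longrightarrow> a0 \<le> \<bar>x \<bullet> i\<bar> \<Longrightarrow> f x = 0"
    and \<mu>: "prob_space \<mu>" "sets \<mu> = sets borel" and \<nu>: "prob_space \<nu>" "sets \<nu> = sets borel"
    and eq: "\<And>t. mchar \<mu> t = mchar \<nu> t"
  shows "(\<integral>x. f x \<partial>\<mu>) = (\<integral>x. f x \<partial>\<nu>)"
proof -
  have "\<forall>n::nat. \<exists>g. continuous_on UNIV g \<and> (\<forall>x. \<bar>g x\<bar> \<le> B) \<and>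
             (\<forall>x. (\<forall>i\<in>Basis. \<bar>x \<bullet> i\<bar> \<le> 2 * (a0 + real n)) \<longrightarrow> g x = f x) \<and>
             (\<integral>x. g x \<partial>\<mu>) = (\<integral>x. g x \<partial>\<nu>)"
  proof
    fix n :: nat
    show "\<exists>g. continuous_on UNIV g \<and> (\<forall>x. \<bar>g x\<bar> \<le> B) \<and>
             (\<forall>x. (\<forall>i\<in>Basis. \<bar>x \<bullet> i\<bar> \<le> 2 * (a0 + real n)) \<longrightarrow> g x = f x) \<and>
             (\<integral>x. g x \<partial>\<mu>) = (\<integral>x. g x \<partial>\<nu>)"
      by (rule periodize[OF _ fc fB _ \<mu> \<nu> eq]) (use a0 fz in auto)
  qed
  then obtain g where g: "\<And>n. continuous_on UNIV (g n)" "\<And>n x. \<bar>g n x\<bar> \<le> B"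
      "\<And>n x. (\<forall>i\<in>Basis. \<bar>x \<bullet> i\<bar> \<le> 2 * (a0 + real n)) \<Longrightarrow> g n x = f x"
      "\<And>n. (\<integral>x. g n x \<partial>\<mu>) = (\<integral>x. g n x \<partial>\<nu>)"
    by metis
  have pw: "(\<lambda>n. g n x) \<longlonglongrightarrow> f x" for x
  proof (rule tendsto_eventually)
    obtain N :: nat where N: "norm x \<le> real N" using real_arch_simple by blast
    show "\<forall>\<^sub>F n in sequentially. g n x = f x"
      unfolding eventually_sequentially
    proof (intro exI allI impI)
      fix n assume "N \<le> n"
      have "\<forall>i\<in>Basis. \<bar>x \<bullet> i\<bar> \<le> 2 * (a0 + real n)"
      proof
        fix i :: 'a assume "i \<in> Basis"
        then have "\<bar>x \<bullet> i\<bar> \<le> norm x" by (rule Basis_le_norm)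
        moreover have "real N \<le> real n" using \<open>N \<le> n\<close> by simp
        moreover have "real n \<le> 2 * (a0 + real n)" using a0 by simp
        ultimately show "\<bar>x \<bullet> i\<bar> \<le> 2 * (a0 + real n)" using N by (meson order_trans)
      qed
      then show "g n x = f x" by (rule g(3))
    qed
  qed
  have lim: "(\<lambda>n. \<integral>x. g n x \<partial>M) \<longlonglongrightarrow> (\<integral>x. f x \<partial>M)"
    if M: "prob_space M" "sets M = sets borel" for M :: "'a measure"
  proof -
    interpret prob_space M by fact
    have [measurable_cong]: "sets M = sets borel" by fact
    have [measurable]: "f \<in> borel_measurable borel" using fc by (rule borel_measurable_continuous_onI)
    have [measurable]: "g n \<in> borel_measurable borel" for n using g(1) by (rule borel_measurable_continuous_onI)
    show ?thesis
      by (rule integral_dominated_convergence[where w="\<lambda>_. B"]) (use g(2) pw in auto)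
  qed
  show ?thesis
    using LIMSEQ_unique[OF lim[OF \<mu>]] lim[OF \<nu>] g(4) by simp
qed

lemma mchar_unique:
  fixes \<mu> \<nu> :: "'a::euclidean_space measure"
  assumes \<mu>: "prob_space \<mu>" "sets \<mu> = sets borel" and \<nu>: "prob_space \<nu>" "sets \<nu> = sets borel"
    and eq: "\<And>t. mchar \<mu> t = mchar \<nu> t"
  shows "\<mu> = \<nu>"
proof -
  have closed_eq: "measure \<mu> F = measure \<nu> F" if F: "closed F" for F :: "'a set"
  proof (cases "F = {}")
    case False
    define \<phi> where "\<phi> n x = max 0 (1 - real n * infdist x F) * max 0 (min 1 (real n - norm x))" for n x
    have \<phi>c: "continuous_on UNIV (\<phi> n)" for n
      unfolding \<phi>_def by (intro continuous_intros)
    have \<phi>B: "\<bar>\<phi> n x\<bar> \<le> 1" for n x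
    proof -
      have "0 \<le> max 0 (1 - real n * infdist x F)" "max 0 (1 - real n * infdist x F) \<le> 1"
        using infdist_nonneg[of x F] by auto
      moreover have "0 \<le> max 0 (min 1 (real n - norm x))" "max 0 (min 1 (real n - norm x)) \<le> 1" by auto
      ultimately show ?thesis unfolding \<phi>_def by (simp add: abs_mult mult_le_one)
    qed
    have \<phi>z: "\<phi> n x = 0" if "i \<in> Basis" "real n + 1 \<le> \<bar>x \<bullet> i\<bar>" for n x i
    proof -
      have "\<bar>x \<bullet> i\<bar> \<le> norm x" using that(1) by (rule Basis_le_norm)
      then have "max 0 (min 1 (real n - norm x)) = 0" using that(2) by simp
      then show ?thesis by (simp add: \<phi>_def)
    qed
    have int_eq: "(\<integral>x. \<phi> n x \<partial>\<mu>) = (\<integral>x. \<phi> n x \<partial>\<nu>)" for n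
      by (rule cont_integral_eq[OF _ \<phi>c \<phi>B _ \<mu> \<nu> eq, of "real n + 1"]) (use \<phi>z in auto)
    have pw: "(\<lambda>n. \<phi> n x) \<longlonglongrightarrow> indicator F x" for x
    proof (rule tendsto_eventually)
      obtain N1 :: nat where N1: "norm x + 1 \<le> real N1" using real_arch_simple by blast
      show "\<forall>\<^sub>F n in sequentially. \<phi> n x = indicator F x"
      proof (cases "x \<in> F")
        case True
        then have "infdist x F = 0" using in_closed_iff_infdist_zero[OF F False] by simp
        then show ?thesis
          unfolding eventually_sequentially using N1 True
          by (intro exI[of _ N1] allI impI) (auto simp: \<phi>_def)
      next
        case xF: False
        then have d: "infdist x F > 0"
          using in_closed_iff_infdist_zero[OF F False] infdist_nonneg[of x F] by auto
        obtain N2 :: nat where N2: "1 / infdist x F \<le> real N2" using real_arch_simple by blast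
        have "\<phi> n x = 0" if "N2 \<le> n" for n
        proof -
          have "1 \<le> real N2 * infdist x F" using N2 d by (simp add: field_simps)
          also have "\<dots> \<le> real n * infdist x F" using that d by (intro mult_right_mono) auto
          finally show ?thesis by (simp add: \<phi>_def)
        qed
        then show ?thesis
          unfolding eventually_sequentially using xF by auto
      qed
    qed
    have lim: "(\<lambda>n. \<integral>x. \<phi> n x \<partial>M) \<longlonglongrightarrow> measure M F"
      if M: "prob_space M" "sets M = sets borel" for M :: "'a measure"
    proof -
      interpret prob_space M by fact
      have [measurable_cong]: "sets M = sets borel" by fact
      have [measurable]: "\<phi> n \<in> borel_measurable borel" for n using \<phi>c by (rule borel_measurable_continuous_onI)
      have [measurable]: "F \<in> sets borel" using F by (simp add: borel_closed)
      have "(\<lambda>n. \<integral>x. \<phi> n x \<partial>M) \<longlonglongrightarrow> (\<integral>x. indicator F x \<partial>M)"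
        by (rule integral_dominated_convergence[where w="\<lambda>_. 1"]) (use \<phi>B pw in auto)
      then show ?thesis by simp
    qed
    show ?thesis using LIMSEQ_unique[OF lim[OF \<mu>]] lim[OF \<nu>] int_eq by simp
  qed simp
  interpret M: prob_space \<mu> by fact
  interpret N: prob_space \<nu> by fact
  have sig: "sets (borel :: 'a measure) = sigma_sets UNIV (Collect closed)"
    by (subst borel_eq_closed) (simp add: sets_measure_of)
  show ?thesis
  proof (rule measure_eqI_generator_eq[where E="Collect closed" and \<Omega>=UNIV and A="\<lambda>_. UNIV"])
    show "Int_stable (Collect closed :: 'a set set)"
      by (auto simp: Int_stable_def)
    show "emeasure \<mu> X = emeasure \<nu> X" if "X \<in> Collect closed" for X
      using closed_eq[of X] that by (simp add: M.emeasure_eq_measure N.emeasure_eq_measure)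
  qed (use \<mu>(2) \<nu>(2) sig in auto)
qed

theorem mainTheorem4:
  fixes \<mu> \<nu> :: "'a::euclidean_space measure" and q :: real
  assumes "prob_space \<mu>" "sets \<mu> = sets borel" "absolutely_continuous lborel \<mu>"
    and "prob_space \<nu>" "sets \<nu> = sets borel" "absolutely_continuous lborel \<nu>"
    and "q \<ge> 1"
  shows "\<forall>\<sigma>>0. DPSWD_pow \<sigma> q \<mu> \<nu> = 0 \<longleftrightarrow> \<mu> = \<nu>"
proof (intro allI impI iffI)
  fix \<sigma> :: real assume "\<sigma> > 0"
  assume "\<mu> = \<nu>"
  then show "DPSWD_pow \<sigma> q \<mu> \<nu> = 0"
    unfolding DPSWD_pow_def wasserstein_pow_def by simp
next
  fix \<sigma> :: real assume \<sigma>: "\<sigma> > 0"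
  assume D0: "DPSWD_pow \<sigma> q \<mu> \<nu> = 0"
  show "\<mu> = \<nu>"
  proof (rule ccontr)
    assume ne: "\<mu> \<noteq> \<nu>"
    obtain t where t: "mchar \<mu> t \<noteq> mchar \<nu> t"
      using mchar_unique[OF assms(1,2,4,5)] ne by blast
    have "t \<noteq> 0" proof
      assume "t = 0" then show False using t mchar_zero[OF assms(1)] mchar_zero[OF assms(4)] by simp
    qed
    define s where "s = norm t"
    define u0 where "u0 = t /\<^sub>R s"
    have s: "s > 0" using \<open>t \<noteq> 0\<close> by (simp add: s_def)
    have u0: "norm u0 = 1" using s by (simp add: u0_def s_def)
    have tu: "s *\<^sub>R u0 = t" using s by (simp add: u0_def)
    define g where "g = exp (- ((\<sigma> * s)^2) / 2)"
    have g: "g > 0" by (simp add: g_def)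
    define h where "h u = cmod (mchar \<mu> (s *\<^sub>R u) - mchar \<nu> (s *\<^sub>R u)) * g" for u
    have hpos: "h u0 > 0" using t g by (simp add: h_def tu)
    have "isCont h u0"
      unfolding h_def
      by (intro continuous_intros isCont_o2[OF _ mchar_cont] assms) 
    then obtain r where r: "r > 0" "\<And>u. dist u u0 < r \<Longrightarrow> dist (h u) (h u0) < h u0 / 2"
      using hpos unfolding continuous_at_eps_delta by (metis half_gt_zero)
    define \<delta> where "\<delta> = h u0 / 2"
    have \<delta>: "\<delta> > 0" using hpos by (simp add: \<delta>_def)
    define c where "c = (\<delta> / (2 * s)) powr q * (\<delta> / 4)"
    have c: "c > 0" using \<delta> s by (simp add: c_def)
    have Dh: "cmod (char (radon_proj u \<mu> \<star> gauss_measure \<sigma>) s - char (radon_proj u \<nu> \<star> gauss_measure \<sigma>) s)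
              = h u" for u
    proof -
      have "char (radon_proj u \<mu> \<star> gauss_measure \<sigma>) s - char (radon_proj u \<nu> \<star> gauss_measure \<sigma>) s
          = (mchar \<mu> (s *\<^sub>R u) - mchar \<nu> (s *\<^sub>R u)) * complex_of_real g"
        using char_conv_proj[OF assms(1,2) \<sigma>] char_conv_proj[OF assms(4,5) \<sigma>]
        by (simp add: g_def algebra_simps)
      then show ?thesis using g by (simp add: h_def norm_mult)
    qed
    have low: "ennreal c * indicator (ball u0 r) u \<le>
        wasserstein_pow q (radon_proj u \<mu> \<star> gauss_measure \<sigma>) (radon_proj u \<nu> \<star> gauss_measure \<sigma>)" for u
    proof (cases "u \<in> ball u0 r")
      case True
      then have "dist u u0 < r" by (simp add: dist_commute)
      then have "dist (h u) (h u0) < h u0 / 2" by (rule r)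
      then have hu: "\<delta> \<le> h u" unfolding \<delta>_def dist_real_def by linarith
      have cle: "c \<le> (h u / (2 * s)) powr q * (h u / 4)"
        unfolding c_def using hu \<delta> s assms(7)
        by (intro mult_mono powr_mono2 divide_right_mono) auto
      have W: "ennreal ((h u / (2 * s)) powr q * (h u / 4)) \<le> wasserstein_pow q (radon_proj u \<mu> \<star> gauss_measure \<sigma>) (radon_proj u \<nu> \<star> gauss_measure \<sigma>)"
        using W_lower[OF real_dist_conv[OF assms(1,2) \<sigma>, of u] real_dist_conv[OF assms(4,5) \<sigma>, of u] s, of q] assms(7)
        unfolding Dh by simp
      have "ennreal c \<le> wasserstein_pow q (radon_proj u \<mu> \<star> gauss_measure \<sigma>) (radon_proj u \<nu> \<star> gauss_measure \<sigma>)"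
        using order_trans[OF ennreal_leI[OF cle] W] .
      then show ?thesis using True by simp
    qed simp
    have "ennreal c * emeasure sphere_uniform (ball u0 r) = (\<integral>\<^sup>+u. ennreal c * indicator (ball u0 r) u \<partial>sphere_uniform)"
      by (subst nn_integral_cmult_indicator) (auto simp: sphere_uniform_def)
    also have "\<dots> \<le> DPSWD_pow \<sigma> q \<mu> \<nu>"
      unfolding DPSWD_pow_def by (intro nn_integral_mono low)
    finally have "ennreal c * emeasure sphere_uniform (ball u0 r) = 0" using D0 by simp
    moreover have "emeasure sphere_uniform (ball u0 r) > 0" by (rule sphere_uniform_ball_pos[OF u0 r(1)])
    ultimately show False using c by simp
  qed
qed

end
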